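(* Let $h\ge1$ and $n$ be positive integers, and let $\phi:\mathbb{R}^n\to\mathbb{R}$ be a $(Q,R)$-bounded function whose Taylor series at $0$ has radius of convergence at least $\nu>0$. Let $L=(L^{(1)},\dots,L^{(T)})$ be a sequence of vectors in $\mathbb{R}^n$ with $\|L^{(t)}\|_\infty\le\nu$ for all $t\in[T]$. Suppose that for some $\alpha\in(0,1)$, $B_1\ge2e^2R$ and $B_0\ge3$, for each $0\le h'\le h$ and each $t\in[T-h']$ we have $\|(D_{h'}L)^{(t)}\|_\infty\le\frac1{B_1}\alpha^{h'}(h')^{B_0h'}$ (with $0^0:=1$). Then for all $t\in[T-h]$, $$\big|(D_h(\phi\circ L))^{(t)}\big|\le\frac{12RQe^2}{B_1}\cdot\alpha^h\cdot h^{B_0h+1},$$ where $\phi\circ L$ is the scalar sequence $(\phi(L^{(1)}),\dots,\phi(L^{(T)}))$.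
   Context: Finite differences: $(D_0L)^{(t)}=L^{(t)}$ and $(D_hL)^{(t)}=(D_{h-1}L)^{(t+1)}-(D_{h-1}L)^{(t)}$ for $1\le t\le T-h$. A function $\phi:\mathbb{R}^n\to\mathbb{R}$, real-analytic near the origin with Taylor series $\sum_{\gamma\in\mathbb{Z}_{\ge0}^n}a_\gamma z^\gamma$ at $0$ (with $z^\gamma=z_1^{\gamma_1}\cdots z_n^{\gamma_n}$, $|\gamma|=\gamma_1+\dots+\gamma_n$), is called $(Q,R)$-bounded if $\sum_{|\gamma|=k}|a_\gamma|\le Q R^k$ for every integer $k\ge0$. *)

theory Defs
  imports "HOL-Analysis.Analysis"
begin

text \<open>Finite differences of a sequence indexed by nat (the paper's indices are 1..T).\<close>
fun fdiff :: "nat \<Rightarrow> (nat \<Rightarrow> 'a::ab_group_add) \<Rightarrow> nat \<Rightarrow> 'a" where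
  "fdiff 0 L t = L t"
| "fdiff (Suc h) L t = fdiff h L (t + 1) - fdiff h L t"

definition monomial :: "real^'n \<Rightarrow> ('n \<Rightarrow> nat) \<Rightarrow> real" where
  "monomial z \<gamma> = (\<Prod>i\<in>UNIV. (z $ i) ^ (\<gamma> i))"

definition QR_bounded_coeffs :: "(('n::finite \<Rightarrow> nat) \<Rightarrow> real) \<Rightarrow> real \<Rightarrow> real \<Rightarrow> bool" where
  "QR_bounded_coeffs a Q R \<longleftrightarrow>
     (\<forall>k::nat. (\<Sum>\<gamma>\<in>{\<gamma>. sum \<gamma> UNIV = k}. \<bar>a \<gamma>\<bar>) \<le> Q * R ^ k)"

definition power_series_on :: "(real^'n \<Rightarrow> real) \<Rightarrow> (('n \<Rightarrow> nat) \<Rightarrow> real) \<Rightarrow> real \<Rightarrow> bool" where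
  "power_series_on \<phi> a \<nu> \<longleftrightarrow>
     (\<forall>z. infnorm z \<le> \<nu> \<longrightarrow> ((\<lambda>\<gamma>. a \<gamma> * monomial z \<gamma>) has_sum \<phi> z) UNIV)"

definition pw0 :: "nat \<Rightarrow> real \<Rightarrow> real" where
  "pw0 h B0 = (if h = 0 then 1 else real h powr (B0 * real h))"

end

theory Submission
  imports Defs
begin


lemma fdiff_const: "fdiff h (\<lambda>s. k) t = (if h = 0 then k else 0)"
  by (induction h arbitrary: t) auto

lemma fdiff_comp: "fdiff h (\<lambda>s. L s $ j) t = fdiff h L t $ j"
  by (induction h arbitrary: t) auto

lemma fdiff_leibniz:
  fixes f g :: "nat \<Rightarrow> real"
  shows "fdiff m (\<lambda>s. f s * g s) t =
     (\<Sum>i\<le>m. real (m choose i) * fdiff i f t * fdiff (m - i) g (t + i))"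
proof (induction m arbitrary: t)
  case 0
  then show ?case by simp
next
  case (Suc m)
  define A where "A = (\<lambda>i. fdiff i f)"
  define B where "B = (\<lambda>i. fdiff i g)"
  have A1: "A i (t+1) = A i t + A (Suc i) t" for i by (simp add: A_def)
  have B1: "i \<le> m \<Longrightarrow> B (m - i) (t + i + 1) - B (m - i) (t + i) = B (Suc m - i) (t + i)" for i
    by (simp add: B_def Suc_diff_le)
  have "fdiff (Suc m) (\<lambda>s. f s * g s) t =
     (\<Sum>i\<le>m. real (m choose i) * A i (t+1) * B (m - i) (t + 1 + i)) -
     (\<Sum>i\<le>m. real (m choose i) * A i t * B (m - i) (t + i))"
    using Suc by (simp add: A_def B_def)
  also have "\<dots> = (\<Sum>i\<le>m. real (m choose i) * A (Suc i) t * B (m - i) (t + Suc i)) +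
     (\<Sum>i\<le>m. real (m choose i) * A i t * B (Suc m - i) (t + i))"
  proof -
    have "(\<Sum>i\<le>m. real (m choose i) * A i (t+1) * B (m - i) (t + 1 + i)) -
     (\<Sum>i\<le>m. real (m choose i) * A i t * B (m - i) (t + i))
      = (\<Sum>i\<le>m. real (m choose i) * A i (t+1) * B (m - i) (t + 1 + i) -
          real (m choose i) * A i t * B (m - i) (t + i))"
      by (simp add: sum_subtractf)
    also have "\<dots> = (\<Sum>i\<le>m. real (m choose i) * A (Suc i) t * B (m - i) (t + Suc i) +
         real (m choose i) * A i t * B (Suc m - i) (t + i))"
    proof (rule sum.cong)
      fix i assume "i \<in> {..m}"
      then have "B (m - i) (t + i + 1) - B (m - i) (t + i) = B (Suc m - i) (t + i)" using B1 by simp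
      then show "real (m choose i) * A i (t+1) * B (m - i) (t + 1 + i) -
          real (m choose i) * A i t * B (m - i) (t + i) = real (m choose i) * A (Suc i) t * B (m - i) (t + Suc i) +
         real (m choose i) * A i t * B (Suc m - i) (t + i)"
        unfolding A1 by (simp add: algebra_simps)
    qed simp
    finally show ?thesis by (simp add: sum.distrib)
  qed
  also have "\<dots> = (\<Sum>i\<le>Suc m. real (Suc m choose i) * A i t * B (Suc m - i) (t + i))"
  proof -
    have e1: "(\<Sum>i\<le>Suc m. real (Suc m choose i) * A i t * B (Suc m - i) (t + i)) =
       A 0 t * B (Suc m) t + (\<Sum>i\<le>m. real (Suc m choose Suc i) * A (Suc i) t * B (m - i) (t + Suc i))"
      by (subst sum.atMost_Suc_shift) simp
    have e2: "(\<Sum>i\<le>m. real (m choose i) * A i t * B (Suc m - i) (t + i)) =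
       A 0 t * B (Suc m) t + (\<Sum>i\<le>m. real (m choose Suc i) * A (Suc i) t * B (m - i) (t + Suc i))"
    proof -
      have "(\<Sum>i\<le>Suc m. real (m choose i) * A i t * B (Suc m - i) (t + i)) =
       A 0 t * B (Suc m) t + (\<Sum>i\<le>m. real (m choose Suc i) * A (Suc i) t * B (m - i) (t + Suc i))"
        by (subst sum.atMost_Suc_shift) simp
      moreover have "(\<Sum>i\<le>Suc m. real (m choose i) * A i t * B (Suc m - i) (t + i)) =
          (\<Sum>i\<le>m. real (m choose i) * A i t * B (Suc m - i) (t + i))"
        by simp
      ultimately show ?thesis by simp
    qed
    show ?thesis unfolding e1 e2 by (simp add: sum.distrib algebra_simps)
  qed
  finally show ?case by (simp add: A_def B_def)
qed



lemma pw0_nonneg: "pw0 i B0 \<ge> 0" by (simp add: pw0_def)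

lemma pw0_pos_eq: "i \<ge> 1 \<Longrightarrow> pw0 i B0 = (real i ^ i) powr B0"
  by (simp add: pw0_def powr_realpow[symmetric] powr_powr mult.commute)

lemma binom_pp:
  fixes i j :: nat
  shows "real ((i+j) choose i) * (real i ^ i * real j ^ j) \<le> real (i+j) ^ (i+j)"
proof -
  have "real (i+j) ^ (i+j) = (\<Sum>k\<le>i+j. real ((i+j) choose k) * real i ^ k * real j ^ (i+j-k))"
    using binomial_ring[of "real i" "real j" "i+j"] by simp
  also have "\<dots> \<ge> real ((i+j) choose i) * real i ^ i * real j ^ (i+j-i)"
    by (rule member_le_sum) auto
  finally show ?thesis by (simp add: mult.assoc)
qed

lemma mid_term:
  assumes B0: "B0 \<ge> 2" and i: "1 \<le> i" "i < m"
  shows "real (m choose i) * pw0 i B0 * pw0 (m - i) B0 \<le> pw0 m B0 / real m"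
proof -
  define j where "j = m - i"
  have m: "m = i + j" "j \<ge> 1" using i by (auto simp: j_def)
  define C where "C = real (m choose i)"
  define P where "P = real i ^ i * real j ^ j"
  define M where "M = real m ^ m"
  have Cm: "C \<ge> real m" unfolding C_def using upper_le_binomial[of i m] i by simp
  have C1: "C \<ge> 1" using Cm i by simp
  have P1: "P \<ge> 1" unfolding P_def using m i by (metis mult_mono' one_le_power of_nat_1 of_nat_mono zero_le_one mult_1 of_nat_0_le_iff)
  have CP: "C * P \<le> M" unfolding C_def P_def M_def m using binom_pp by simp
  have "real (m choose i) * pw0 i B0 * pw0 (m - i) B0 = C * P powr B0"
    using i m by (simp add: pw0_pos_eq C_def P_def j_def[symmetric] powr_mult mult.assoc)
  also have "\<dots> \<le> C * (M / C) powr B0"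
    using CP C1 P1 B0 by (intro mult_left_mono powr_mono2) (auto simp: field_simps)
  also have "\<dots> = M powr B0 / C powr (B0 - 1)"
    using C1 P1 CP by (simp add: powr_divide powr_diff field_simps)
  also have "\<dots> \<le> M powr B0 / C"
  proof -
    have "C powr 1 \<le> C powr (B0 - 1)" using C1 B0 by (intro powr_mono) auto
    then have "C \<le> C powr (B0 - 1)" using C1 by simp
    then show ?thesis using C1 by (intro divide_left_mono) auto
  qed
  also have "\<dots> \<le> M powr B0 / real m"
    using Cm i by (intro divide_left_mono) auto
  also have "M powr B0 = pw0 m B0" using i by (simp add: pw0_pos_eq M_def)
  finally show ?thesis .
qed

lemma pw0_conv:
  assumes B0: "B0 \<ge> 2"
  shows "(\<Sum>i\<le>m. real (m choose i) * pw0 i B0 * pw0 (m - i) B0) \<le> 3 * pw0 m B0"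
proof (cases "m = 0")
  case True then show ?thesis by (simp add: pw0_def)
next
  case False
  have split: "{..m} = insert 0 (insert m {1..<m})" using False by auto
  have "(\<Sum>i\<in>{1..<m}. real (m choose i) * pw0 i B0 * pw0 (m - i) B0) \<le>
        (\<Sum>i\<in>{1..<m}. pw0 m B0 / real m)"
    using mid_term[OF B0] by (intro sum_mono) auto
  also have "\<dots> = real (m - 1) * (pw0 m B0 / real m)" by simp
  also have "\<dots> \<le> pw0 m B0"
  proof -
    have "real (m - 1) \<le> real m" by simp
    then have "real (m - 1) * (pw0 m B0 / real m) \<le> real m * (pw0 m B0 / real m)"
      by (intro mult_right_mono) (auto simp: pw0_nonneg)
    then show ?thesis using False by simp
  qed
  finally have mid: "(\<Sum>i\<in>{1..<m}. real (m choose i) * pw0 i B0 * pw0 (m - i) B0) \<le> pw0 m B0" .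
  have "(\<Sum>i\<le>m. real (m choose i) * pw0 i B0 * pw0 (m - i) B0) =
     pw0 m B0 + pw0 m B0 + (\<Sum>i\<in>{1..<m}. real (m choose i) * pw0 i B0 * pw0 (m - i) B0)"
    unfolding split using False by (simp add: pw0_def)
  then show ?thesis using mid by simp
qed



definition bnd :: "nat \<Rightarrow> nat \<Rightarrow> real \<Rightarrow> real \<Rightarrow> real \<Rightarrow> (nat \<Rightarrow> real) \<Rightarrow> bool" where
  "bnd h T \<alpha> B0 K f \<longleftrightarrow> (\<forall>m t. m \<le> h \<longrightarrow> 1 \<le> t \<longrightarrow> t + m \<le> T \<longrightarrow>
      \<bar>fdiff m f t\<bar> \<le> K * \<alpha> ^ m * pw0 m B0)"

lemma bnd_mult:
  assumes "K1 \<ge> 0" "K2 \<ge> 0" "\<alpha> \<ge> 0" "B0 \<ge> 2"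
    and f: "bnd h T \<alpha> B0 K1 f" and g: "bnd h T \<alpha> B0 K2 g"
  shows "bnd h T \<alpha> B0 (3 * K1 * K2) (\<lambda>s. f s * g s)"
  unfolding bnd_def
proof (intro allI impI)
  fix m t assume m: "m \<le> h" and t: "1 \<le> t" "t + m \<le> T"
  have "\<bar>fdiff m (\<lambda>s. f s * g s) t\<bar> \<le>
     (\<Sum>i\<le>m. \<bar>real (m choose i) * fdiff i f t * fdiff (m - i) g (t + i)\<bar>)"
    unfolding fdiff_leibniz by (rule sum_abs)
  also have "\<dots> \<le> (\<Sum>i\<le>m. real (m choose i) * (K1 * \<alpha> ^ i * pw0 i B0) * (K2 * \<alpha> ^ (m - i) * pw0 (m - i) B0))"
  proof (intro sum_mono)
    fix i assume i: "i \<in> {..m}"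
    have b1: "\<bar>fdiff i f t\<bar> \<le> K1 * \<alpha> ^ i * pw0 i B0"
      using f i m t unfolding bnd_def by auto
    have b2: "\<bar>fdiff (m - i) g (t + i)\<bar> \<le> K2 * \<alpha> ^ (m - i) * pw0 (m - i) B0"
      using g i m t unfolding bnd_def by auto
    show "\<bar>real (m choose i) * fdiff i f t * fdiff (m - i) g (t + i)\<bar> \<le>
      real (m choose i) * (K1 * \<alpha> ^ i * pw0 i B0) * (K2 * \<alpha> ^ (m - i) * pw0 (m - i) B0)"
      unfolding abs_mult using b1 b2
      by (intro mult_mono) (auto simp: mult_nonneg_nonneg)
  qed
  also have "\<dots> = K1 * K2 * \<alpha> ^ m * (\<Sum>i\<le>m. real (m choose i) * pw0 i B0 * pw0 (m - i) B0)"
    unfolding sum_distrib_left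
  proof (rule sum.cong)
    fix i assume "i \<in> {..m}"
    then have "\<alpha> ^ i * \<alpha> ^ (m - i) = \<alpha> ^ m" by (simp flip: power_add)
    then show "real (m choose i) * (K1 * \<alpha> ^ i * pw0 i B0) * (K2 * \<alpha> ^ (m - i) * pw0 (m - i) B0) =
         K1 * K2 * \<alpha> ^ m * (real (m choose i) * pw0 i B0 * pw0 (m - i) B0)"
      by (metis (no_types, lifting) mult.assoc mult.left_commute)
  qed simp
  also have "\<dots> \<le> K1 * K2 * \<alpha> ^ m * (3 * pw0 m B0)"
    using assms by (intro mult_left_mono pw0_conv) auto
  finally show "\<bar>fdiff m (\<lambda>s. f s * g s) t\<bar> \<le> 3 * K1 * K2 * \<alpha> ^ m * pw0 m B0"
    by (simp add: algebra_simps)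
qed

lemma bnd_one: "\<alpha> \<ge> 0 \<Longrightarrow> bnd h T \<alpha> B0 1 (\<lambda>s. 1)"
  unfolding bnd_def by (auto simp: fdiff_const pw0_def)

lemma bnd_mono: "bnd h T \<alpha> B0 K f \<Longrightarrow> K \<le> K' \<Longrightarrow> \<alpha> \<ge> 0 \<Longrightarrow> bnd h T \<alpha> B0 K' f"
  unfolding bnd_def by (meson dual_order.trans mult_right_mono pw0_nonneg zero_le_power)

lemma bnd_pow:
  assumes "c \<ge> 0" "S \<ge> 0" "\<alpha> \<ge> 0" "B0 \<ge> 2"
    and x: "bnd h T \<alpha> B0 c x" and P: "bnd h T \<alpha> B0 S P"
  shows "bnd h T \<alpha> B0 ((3 * c) ^ n * S) (\<lambda>s. x s ^ n * P s)"
proof (induction n)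
  case 0 then show ?case using P by simp
next
  case (Suc n)
  have "bnd h T \<alpha> B0 (3 * c * ((3 * c) ^ n * S)) (\<lambda>s. x s * (x s ^ n * P s))"
    using bnd_mult[OF _ _ _ _ x Suc] assms by auto
  then show ?case by (simp add: mult.assoc mult.left_commute)
qed

lemma bnd_prod:
  assumes "c \<ge> 0" "\<alpha> \<ge> 0" "B0 \<ge> 2" "finite I"
    and x: "\<And>i. bnd h T \<alpha> B0 c (x i)"
  shows "bnd h T \<alpha> B0 ((3 * c) ^ (\<Sum>i\<in>I. e i)) (\<lambda>s. \<Prod>i\<in>I. x i s ^ e i)"
  using \<open>finite I\<close>
proof (induction I rule: finite_induct)
  case empty then show ?case using bnd_one assms by simp
next
  case (insert i I)
  have "bnd h T \<alpha> B0 ((3 * c) ^ e i * (3 * c) ^ (\<Sum>i\<in>I. e i)) (\<lambda>s. x i s ^ e i * (\<Prod>i\<in>I. x i s ^ e i))"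
    using bnd_pow[OF _ _ _ _ x insert.IH] assms by auto
  then show ?case using insert by (simp add: power_add)
qed



lemma hs:
  fixes \<phi> :: "real^'n \<Rightarrow> real" and a :: "('n \<Rightarrow> nat) \<Rightarrow> real" and L :: "nat \<Rightarrow> real^'n"
  assumes series: "power_series_on \<phi> a \<nu>"
    and Lnu: "\<And>t. 1 \<le> t \<Longrightarrow> t \<le> T \<Longrightarrow> infnorm (L t) \<le> \<nu>"
  shows "1 \<le> t \<Longrightarrow> t + h \<le> T \<Longrightarrow>
    ((\<lambda>\<gamma>. a \<gamma> * fdiff h (\<lambda>s. monomial (L s) \<gamma>) t) has_sum fdiff h (\<lambda>s. \<phi> (L s)) t) UNIV"
proof (induction h arbitrary: t)
  case 0
  then show ?case using series Lnu[of t] unfolding power_series_on_def by simp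
next
  case (Suc h)
  have h1: "((\<lambda>\<gamma>. a \<gamma> * fdiff h (\<lambda>s. monomial (L s) \<gamma>) (t+1)) has_sum fdiff h (\<lambda>s. \<phi> (L s)) (t+1)) UNIV"
    using Suc by simp
  have h0: "((\<lambda>\<gamma>. a \<gamma> * fdiff h (\<lambda>s. monomial (L s) \<gamma>) t) has_sum fdiff h (\<lambda>s. \<phi> (L s)) t) UNIV"
    using Suc by simp
  have "((\<lambda>\<gamma>. a \<gamma> * fdiff h (\<lambda>s. monomial (L s) \<gamma>) (t+1) + - (a \<gamma> * fdiff h (\<lambda>s. monomial (L s) \<gamma>) t))
     has_sum (fdiff h (\<lambda>s. \<phi> (L s)) (t+1) + - fdiff h (\<lambda>s. \<phi> (L s)) t)) UNIV"
    by (intro has_sum_add h1 has_sum_uminus[THEN iffD2]) (use h0 in simp)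
  then show ?case by (simp add: algebra_simps)
qed

lemma geo_bound:
  fixes y :: real
  assumes "0 \<le> y" "y \<le> 1/2"
  shows "(\<Sum>k\<le>N. if k = 0 then 0 else y ^ k) \<le> 2 * y - 2 * y ^ (Suc N)"
proof (induction N)
  case 0 then show ?case by simp
next
  case (Suc N)
  have "2 * y ^ Suc (Suc N) \<le> y ^ Suc N"
  proof -
    have "2 * y ^ Suc (Suc N) = (2*y) * y ^ Suc N" by simp
    also have "\<dots> \<le> 1 * y ^ Suc N" using assms by (intro mult_right_mono) auto
    finally show ?thesis by simp
  qed
  then show ?case using Suc by simp
qed

lemma finite_level: "finite {\<gamma> :: 'n::finite \<Rightarrow> nat. sum \<gamma> UNIV \<le> N}"
proof -
  have "{\<gamma> :: 'n \<Rightarrow> nat. sum \<gamma> UNIV \<le> N} \<subseteq> PiE UNIV (\<lambda>_. {..N})"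
  proof
    fix \<gamma> :: "'n \<Rightarrow> nat" assume "\<gamma> \<in> {\<gamma>. sum \<gamma> UNIV \<le> N}"
    then have "\<gamma> i \<le> N" for i using member_le_sum[of i UNIV \<gamma>] by auto
    then show "\<gamma> \<in> PiE UNIV (\<lambda>_. {..N})" by (auto simp: PiE_def extensional_def)
  qed
  moreover have "finite (PiE (UNIV :: 'n set) (\<lambda>_. {..N}))" by (intro finite_PiE) auto
  ultimately show ?thesis by (rule finite_subset)
qed



theorem lemma4p4:
  fixes \<phi> :: "real^'n \<Rightarrow> real" and a :: "('n \<Rightarrow> nat) \<Rightarrow> real"
    and L :: "nat \<Rightarrow> real^'n" and h T :: nat
    and Q R \<nu> \<alpha> B1 B0 :: real
  assumes h: "h \<ge> 1"
    and bounded: "QR_bounded_coeffs a Q R"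
    and series: "power_series_on \<phi> a \<nu>"
    and nu: "\<nu> > 0"
    and Lnu: "\<And>t. 1 \<le> t \<Longrightarrow> t \<le> T \<Longrightarrow> infnorm (L t) \<le> \<nu>"
    and alpha: "0 < \<alpha>" "\<alpha> < 1"
    and B1: "B1 \<ge> 2 * exp 1 ^ 2 * R"
    and B0: "B0 \<ge> 3"
    and D: "\<And>h' t. h' \<le> h \<Longrightarrow> 1 \<le> t \<Longrightarrow> t \<le> T - h' \<Longrightarrow>
              infnorm (fdiff h' L t) \<le> (1 / B1) * \<alpha> ^ h' * pw0 h' B0"
  shows "\<forall>t. 1 \<le> t \<and> t \<le> T - h \<longrightarrow>
           \<bar>fdiff h (\<lambda>s. \<phi> (L s)) t\<bar>
             \<le> (12 * R * Q * exp 1 ^ 2 / B1) * \<alpha> ^ h * real h powr (B0 * real h + 1)"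
proof (intro allI impI)
  fix t assume t: "1 \<le> t \<and> t \<le> T - h"
  then have tT: "1 \<le> t" "t + h \<le> T" using h by auto
  have pwh: "pw0 h B0 > 0" using h by (simp add: pw0_def)
  have B1nn: "B1 \<ge> 0"
  proof (rule ccontr)
    assume "\<not> B1 \<ge> 0"
    then have "(1 / B1) * \<alpha> ^ h * pw0 h B0 < 0"
      using pwh alpha by (simp add: divide_pos_neg)
    moreover have "infnorm (fdiff h L t) \<le> (1 / B1) * \<alpha> ^ h * pw0 h B0" using D[of h t] t by auto
    moreover have "infnorm (fdiff h L t) \<ge> 0" by (rule infnorm_pos_le)
    ultimately show False by linarith
  qed
  define c where "c = 1 / B1"
  have c0: "c \<ge> 0" using B1nn by (simp add: c_def)
  have Q0: "Q \<ge> 0"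
  proof -
    have "0 \<le> (\<Sum>\<gamma>\<in>{\<gamma>. sum \<gamma> UNIV = (0::nat)}. \<bar>a \<gamma>\<bar>)" by (simp add: sum_nonneg)
    also have "\<dots> \<le> Q * R ^ 0" using bounded unfolding QR_bounded_coeffs_def by blast
    finally show ?thesis by simp
  qed
  define R' where "R' = max R 0"
  have R'0: "R' \<ge> 0" by (simp add: R'_def)
  have QR'R: "R' * Q = R * Q"
  proof (cases "R \<ge> 0")
    case True then show ?thesis by (simp add: R'_def)
  next
    case False
    have "0 \<le> (\<Sum>\<gamma>\<in>{\<gamma>. sum \<gamma> UNIV = (1::nat)}. \<bar>a \<gamma>\<bar>)" by (simp add: sum_nonneg)
    also have "\<dots> \<le> Q * R ^ 1" using bounded unfolding QR_bounded_coeffs_def by blast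
    finally have "Q * R \<ge> 0" by simp
    then have "Q = 0" using False Q0 by (simp add: zero_le_mult_iff)
    then show ?thesis by simp
  qed
  have bounded': "(\<Sum>\<gamma>\<in>{\<gamma>. sum \<gamma> UNIV = k}. \<bar>a \<gamma>\<bar>) \<le> Q * R' ^ k" for k
  proof (cases "R \<ge> 0")
    case True then show ?thesis using bounded by (simp add: R'_def QR_bounded_coeffs_def)
  next
    case False
    have "0 \<le> (\<Sum>\<gamma>\<in>{\<gamma>. sum \<gamma> UNIV = (1::nat)}. \<bar>a \<gamma>\<bar>)" by (simp add: sum_nonneg)
    also have "\<dots> \<le> Q * R ^ 1" using bounded unfolding QR_bounded_coeffs_def by blast
    finally have "Q * R \<ge> 0" by simp
    then have "Q = 0" using False Q0 by (simp add: zero_le_mult_iff)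
    then show ?thesis using bounded False unfolding QR_bounded_coeffs_def
      by (metis mult_zero_left)
  qed
  define y where "y = 3 * c * R'"
  have y0: "y \<ge> 0" using c0 R'0 by (simp add: y_def)
  have yhalf: "y \<le> 1/2"
  proof (cases "B1 = 0")
    case True then show ?thesis by (simp add: y_def c_def)
  next
    case False
    then have B1p: "B1 > 0" using B1nn by simp
    have e2: "exp 1 ^ 2 \<ge> (4::real)"
    proof -
      have "(2::real) \<le> exp 1" using exp_ge_add_one_self[of 1] by simp
      then have "(2::real)^2 \<le> exp 1 ^ 2" by (intro power_mono) auto
      then show ?thesis by simp
    qed
    have "B1 \<ge> 2 * exp 1 ^ 2 * R'" using B1 B1nn by (simp add: R'_def)
    moreover have "2 * exp 1 ^ 2 * R' \<ge> 8 * R'" using e2 R'0 by (intro mult_right_mono) auto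
    ultimately have "8 * R' \<le> B1" by linarith
    then show ?thesis using B1p by (simp add: y_def c_def field_simps)
  qed
  have comp: "bnd h T \<alpha> B0 c (\<lambda>s. L s $ j)" for j
    unfolding bnd_def
  proof (intro allI impI)
    fix m t' assume "m \<le> h" "1 \<le> t'" "t' + m \<le> T"
    then have "infnorm (fdiff m L t') \<le> (1 / B1) * \<alpha> ^ m * pw0 m B0" using D[of m t'] by auto
    then show "\<bar>fdiff m (\<lambda>s. L s $ j) t'\<bar> \<le> c * \<alpha> ^ m * pw0 m B0"
      unfolding fdiff_comp c_def using component_le_infnorm_cart[of "fdiff m L t'" j] by linarith
  qed
  define G where "G = (\<lambda>\<gamma>::'n\<Rightarrow>nat. (if sum \<gamma> UNIV = 0 then 0 else \<bar>a \<gamma>\<bar> * (3 * c) ^ sum \<gamma> UNIV))"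
  define f where "f = (\<lambda>\<gamma>. a \<gamma> * fdiff h (\<lambda>s. monomial (L s) \<gamma>) t)"
  have fG: "\<bar>f \<gamma>\<bar> \<le> G \<gamma> * (\<alpha> ^ h * pw0 h B0)" for \<gamma>
  proof (cases "sum \<gamma> UNIV = 0")
    case True
    then have "\<gamma> i = 0" for i by simp
    then have "monomial z \<gamma> = 1" for z by (simp add: monomial_def)
    then show ?thesis using h True by (simp add: f_def G_def fdiff_const)
  next
    case False
    have "bnd h T \<alpha> B0 ((3 * c) ^ (\<Sum>i\<in>UNIV. \<gamma> i)) (\<lambda>s. \<Prod>i\<in>UNIV. L s $ i ^ \<gamma> i)"
      by (rule bnd_prod[OF c0 _ _ _ comp]) (use alpha B0 in auto)
    then have "\<bar>fdiff h (\<lambda>s. monomial (L s) \<gamma>) t\<bar> \<le> (3 * c) ^ sum \<gamma> UNIV * \<alpha> ^ h * pw0 h B0"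
      unfolding bnd_def monomial_def using tT by auto
    moreover have "G \<gamma> = \<bar>a \<gamma>\<bar> * (3 * c) ^ sum \<gamma> UNIV" using False by (auto simp: G_def)
    ultimately show ?thesis unfolding f_def abs_mult
      by (metis abs_ge_zero mult.assoc mult_left_mono)
  qed
  have Gsum: "sum G F \<le> 2 * y * Q" if F: "finite F" for F
  proof -
    define N where "N = Max ((\<lambda>\<gamma>. sum \<gamma> UNIV) ` F \<union> {0})"
    define U where "U = {\<gamma> :: 'n \<Rightarrow> nat. sum \<gamma> UNIV \<le> N}"
    have finU: "finite U" unfolding U_def by (rule finite_level)
    have FU: "F \<subseteq> U" unfolding U_def N_def using F by (auto intro: Max_ge)
    have Gnn: "G \<gamma> \<ge> 0" for \<gamma> using c0 by (simp add: G_def)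
    have "sum G F \<le> sum G U" using FU finU Gnn by (intro sum_mono2) auto
    also have "\<dots> = (\<Sum>k\<le>N. sum G {\<gamma>\<in>U. sum \<gamma> UNIV = k})"
      by (rule sum.group[symmetric]) (use finU in \<open>auto simp: U_def\<close>)
    also have "\<dots> \<le> (\<Sum>k\<le>N. Q * (if k = 0 then 0 else y ^ k))"
    proof (rule sum_mono)
      fix k assume k: "k \<in> {..N}"
      have eq: "{\<gamma>\<in>U. sum \<gamma> UNIV = k} = {\<gamma>. sum \<gamma> UNIV = k}" using k by (auto simp: U_def)
      show "sum G {\<gamma>\<in>U. sum \<gamma> UNIV = k} \<le> Q * (if k = 0 then 0 else y ^ k)"
      proof (cases "k = 0")
        case True then show ?thesis unfolding eq by (simp add: G_def)
      next
        case False
        have "sum G {\<gamma>\<in>U. sum \<gamma> UNIV = k} = (3 * c) ^ k * (\<Sum>\<gamma>\<in>{\<gamma>. sum \<gamma> UNIV = k}. \<bar>a \<gamma>\<bar>)"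
          unfolding eq G_def using False by (simp add: sum_distrib_left mult.commute)
        also have "\<dots> \<le> (3 * c) ^ k * (Q * R' ^ k)"
          using bounded' c0 by (intro mult_left_mono) auto
        also have "\<dots> = Q * y ^ k" by (simp add: y_def power_mult_distrib)
        finally show ?thesis using False by simp
      qed
    qed
    also have "\<dots> = Q * (\<Sum>k\<le>N. if k = 0 then 0 else y ^ k)" by (simp add: sum_distrib_left)
    also have "\<dots> \<le> Q * (2 * y)"
    proof -
      have "(\<Sum>k\<le>N. if k = 0 then 0 else y ^ k) \<le> 2 * y - 2 * y ^ Suc N" by (rule geo_bound[OF y0 yhalf])
      also have "\<dots> \<le> 2 * y" using y0 by simp
      finally show ?thesis using Q0 by (intro mult_left_mono) auto
    qed
    finally show ?thesis by (simp add: mult.commute)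
  qed
  have HS: "(f has_sum fdiff h (\<lambda>s. \<phi> (L s)) t) UNIV"
    unfolding f_def by (rule hs[OF series Lnu tT]) auto
  define Bd where "Bd = 2 * y * Q * (\<alpha> ^ h * pw0 h B0)"
  have Fb: "sum (\<lambda>\<gamma>. \<bar>f \<gamma>\<bar>) F \<le> Bd" if "finite F" for F
  proof -
    have "sum (\<lambda>\<gamma>. \<bar>f \<gamma>\<bar>) F \<le> sum (\<lambda>\<gamma>. G \<gamma> * (\<alpha> ^ h * pw0 h B0)) F" by (intro sum_mono fG)
    also have "\<dots> = sum G F * (\<alpha> ^ h * pw0 h B0)" by (simp add: sum_distrib_right)
    also have "\<dots> \<le> 2 * y * Q * (\<alpha> ^ h * pw0 h B0)"
      using Gsum[OF that] alpha pwh by (intro mult_right_mono) auto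
    finally show ?thesis by (simp add: Bd_def)
  qed
  have up: "fdiff h (\<lambda>s. \<phi> (L s)) t \<le> Bd"
  proof (rule has_sum_le_finite_sums[OF HS])
    fix F :: "('n \<Rightarrow> nat) set" assume "finite F"
    have "sum f F \<le> sum (\<lambda>\<gamma>. \<bar>f \<gamma>\<bar>) F" by (intro sum_mono) auto
    then show "sum f F \<le> Bd" using Fb[OF \<open>finite F\<close>] by linarith
  qed
  have "((\<lambda>\<gamma>. - f \<gamma>) has_sum - fdiff h (\<lambda>s. \<phi> (L s)) t) UNIV"
    using HS by (simp add: has_sum_uminus)
  then have lo: "- fdiff h (\<lambda>s. \<phi> (L s)) t \<le> Bd"
  proof (rule has_sum_le_finite_sums)
    fix F :: "('n \<Rightarrow> nat) set" assume "finite F"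
    have "sum (\<lambda>\<gamma>. - f \<gamma>) F \<le> sum (\<lambda>\<gamma>. \<bar>f \<gamma>\<bar>) F" by (intro sum_mono) auto
    then show "sum (\<lambda>\<gamma>. - f \<gamma>) F \<le> Bd" using Fb[OF \<open>finite F\<close>] by linarith
  qed
  have main: "\<bar>fdiff h (\<lambda>s. \<phi> (L s)) t\<bar> \<le> Bd" using up lo by linarith
  have X0: "c * R' * Q * \<alpha> ^ h * pw0 h B0 \<ge> 0" using c0 R'0 Q0 alpha pwh by simp
  have e1: "exp 1 ^ 2 \<ge> (1::real)" by (simp add: one_le_power)
  have "Bd = 6 * (c * R' * Q * \<alpha> ^ h * pw0 h B0)" by (simp add: Bd_def y_def)
  also have "\<dots> \<le> (12 * exp 1 ^ 2 * real h) * (c * R' * Q * \<alpha> ^ h * pw0 h B0)"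
  proof (rule mult_right_mono[OF _ X0])
    have "12 * exp 1 ^ 2 * real h \<ge> 12 * 1 * 1" using e1 h by (intro mult_mono) auto
    then show "6 \<le> 12 * exp 1 ^ 2 * real h" by linarith
  qed
  also have "\<dots> = (12 * R * Q * exp 1 ^ 2 / B1) * \<alpha> ^ h * real h powr (B0 * real h + 1)"
  proof -
    have "real h powr (B0 * real h + 1) = pw0 h B0 * real h"
      using h by (simp add: pw0_def powr_add)
    then show ?thesis using QR'R by (simp add: c_def field_simps) blast
  qed
  finally show "\<bar>fdiff h (\<lambda>s. \<phi> (L s)) t\<bar> \<le> (12 * R * Q * exp 1 ^ 2 / B1) * \<alpha> ^ h * real h powr (B0 * real h + 1)"
    using main by linarith
qed


end
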